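(* Assume (A1) and (A2) and let $\ell_n=n^s$ with $s\in(0.5,1)$. Then under the null hypothesis $\sigma\equiv\sigma_H$, $$\sqrt n\,(U_1(n)-U_2(n))\xrightarrow{P}0\qquad(n\to\infty).$$
   Context: Let $(Y_i)_{i\in\mathbb N}$ be a strictly stationary real-valued process with $E[Y_1]=0$, $\mathrm{Var}(Y_1)=1$, which is absolutely regular, i.e. $\beta_Y(k):=\sup_{m\in\mathbb N}\beta\big(\sigma(Y_i,1\le i\le m),\sigma(Y_i,i\ge k+m)\big)\to0$ as $k\to\infty$, where $\beta(\mathcal A,\mathcal B)=E\big[\operatorname{ess\,sup}_{A\in\mathcal A}|P(A\mid\mathcal B)-P(A)|\big]$. Let $\mu:[0,1]\to\mathbb R$ be Lipschitz-continuous and $\sigma:[0,1]\to[\sigma_0,\infty)$ be càdlàg for some constant $\sigma_0>0$. The observations are $X_i=X_{i,n}=\sigma(i/n)Y_i+\mu(i/n)$, $1\le i\le n$. The null hypothesis means $\sigma\equiv\sigma_H$ for a constant $\sigma_H>0$. The long-run variance $\kappa^2:=\mathrm{Var}(Y_1^2)+2\sum_{k\ge1}\mathrm{Cov}(Y_1^2,Y_{k+1}^2)$ is assumed finite and strictly positive. The block length is $\ell_n=n^s$ and $b_n=n/\ell_n$ (integers); the $j$-th block is $\{(j-1)\ell_n+1,\dots,j\ell_n\}$. Define $s_j^2=\frac1{\ell_n}\sum_{i=(j-1)\ell_n+1}^{j\ell_n}(X_i-\mu(i/n))^2$, $U_1(n)=\frac{1}{b_n(b_n-1)}\sum_{1\le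 j\ne k\le b_n}|\log s_j^2-\log s_k^2|$, $S_j=\frac1{\ell_n}\sum_{i=(j-1)\ell_n+1}^{j\ell_n}Y_i^2-1$, and $U_2(n)=\frac{1}{b_n(b_n-1)}\sum_{1\le j\ne k\le b_n}|S_j-S_k|$. Assumptions: (A1) there is $\vartheta>0$ with $E|Y_1|^{4+2\vartheta}<\infty$; (A2) for the same $\vartheta$, $\sum_{k=1}^\infty\beta_Y(k)^{\vartheta/(2+\vartheta)}<\infty$. *)

theory Defs
  imports "HOL-Probability.Probability"
begin

text \<open>Sigma-algebra generated by the random variables Y i, i in I (as a measure on space M;
  only its sets are relevant).\<close>
definition gen_sigma :: "'a measure \<Rightarrow> (nat \<Rightarrow> 'a \<Rightarrow> real) \<Rightarrow> nat set \<Rightarrow> 'a measure" where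
  "gen_sigma M Y I = sigma (space M) {Y i -` B \<inter> space M | i B. i \<in> I \<and> B \<in> sets borel}"

text \<open>Absolute regularity coefficient beta(A,B) = E[ess sup over S in A of |P(S|B) - P(S)|].
  The essential supremum of the family is the a.e.-smallest measurable function dominating
  every member a.e.; its expectation is the infimum of the expectations of all such dominating
  functions, which is how it is written here.\<close>
definition beta_coeff :: "'a measure \<Rightarrow> 'a measure \<Rightarrow> 'a measure \<Rightarrow> real" where
  "beta_coeff M A B = enn2real (INF g \<in> {g :: 'a \<Rightarrow> ennreal. g \<in> borel_measurable M \<and>
       (\<forall>S\<in>sets A. AE x in M. ennreal \<bar>real_cond_exp M B (indicator S) x - measure M S\<bar> \<le> g x)}.
       \<integral>\<^sup>+ x. g x \<partial>M)"

definition beta_Y :: "'a measure \<Rightarrow> (nat \<Rightarrow> 'a \<Rightarrow> real) \<Rightarrow> nat \<Rightarrow> real" where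
  "beta_Y M Y k = (SUP m \<in> {1..}. beta_coeff M (gen_sigma M Y {1..m}) (gen_sigma M Y {k+m..}))"

definition strictly_stationary :: "'a measure \<Rightarrow> (nat \<Rightarrow> 'a \<Rightarrow> real) \<Rightarrow> bool" where
  "strictly_stationary M Y \<longleftrightarrow> (\<forall>m h.
     distr M (PiM {..<m} (\<lambda>_. borel)) (\<lambda>x. \<lambda>i\<in>{..<m}. Y (Suc i + h) x) =
     distr M (PiM {..<m} (\<lambda>_. borel)) (\<lambda>x. \<lambda>i\<in>{..<m}. Y (Suc i) x))"

definition blen :: "real \<Rightarrow> nat \<Rightarrow> nat" where
  "blen s n = nat \<lfloor>real n powr s\<rfloor>"

definition nblocks :: "real \<Rightarrow> nat \<Rightarrow> nat" where
  "nblocks s n = n div blen s n"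

definition obs :: "(real \<Rightarrow> real) \<Rightarrow> (real \<Rightarrow> real) \<Rightarrow> (nat \<Rightarrow> 'a \<Rightarrow> real) \<Rightarrow> nat \<Rightarrow> nat \<Rightarrow> 'a \<Rightarrow> real" where
  "obs sig mu Y n i x = sig (real i / real n) * Y i x + mu (real i / real n)"

definition block_var :: "real \<Rightarrow> (real \<Rightarrow> real) \<Rightarrow> (real \<Rightarrow> real) \<Rightarrow> (nat \<Rightarrow> 'a \<Rightarrow> real) \<Rightarrow> nat \<Rightarrow> nat \<Rightarrow> 'a \<Rightarrow> real" where
  "block_var s sig mu Y n j x = (1 / real (blen s n)) *
     (\<Sum>i\<in>{(j-1) * blen s n + 1 .. j * blen s n}. (obs sig mu Y n i x - mu (real i / real n))\<^sup>2)"

definition U1 :: "real \<Rightarrow> (real \<Rightarrow> real) \<Rightarrow> (real \<Rightarrow> real) \<Rightarrow> (nat \<Rightarrow> 'a \<Rightarrow> real) \<Rightarrow> nat \<Rightarrow> 'a \<Rightarrow> real" where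
  "U1 s sig mu Y n x = (1 / (real (nblocks s n) * (real (nblocks s n) - 1))) *
     (\<Sum>j\<in>{1..nblocks s n}. \<Sum>k\<in>{1..nblocks s n} - {j}.
        \<bar>ln (block_var s sig mu Y n j x) - ln (block_var s sig mu Y n k x)\<bar>)"

definition block_S :: "real \<Rightarrow> (nat \<Rightarrow> 'a \<Rightarrow> real) \<Rightarrow> nat \<Rightarrow> nat \<Rightarrow> 'a \<Rightarrow> real" where
  "block_S s Y n j x = (1 / real (blen s n)) * (\<Sum>i\<in>{(j-1) * blen s n + 1 .. j * blen s n}. (Y i x)\<^sup>2) - 1"

definition U2 :: "real \<Rightarrow> (nat \<Rightarrow> 'a \<Rightarrow> real) \<Rightarrow> nat \<Rightarrow> 'a \<Rightarrow> real" where
  "U2 s Y n x = (1 / (real (nblocks s n) * (real (nblocks s n) - 1))) *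
     (\<Sum>j\<in>{1..nblocks s n}. \<Sum>k\<in>{1..nblocks s n} - {j}. \<bar>block_S s Y n j x - block_S s Y n k x\<bar>)"

end

theory Submission imports Defs begin


lemma stat_pair:
  fixes M :: "'a measure" and Y :: "nat \<Rightarrow> 'a \<Rightarrow> real" and F :: "real \<times> real \<Rightarrow> real"
  assumes meas: "\<And>i. Y i \<in> borel_measurable M"
    and stat: "strictly_stationary M Y"
    and F: "F \<in> borel_measurable borel"
    and ik: "1 \<le> i" "i \<le> k"
  shows "integrable M (\<lambda>x. F (Y i x, Y k x)) = integrable M (\<lambda>x. F (Y 1 x, Y (k - i + 1) x))"
    "(\<integral>x. F (Y i x, Y k x) \<partial>M) = (\<integral>x. F (Y 1 x, Y (k - i + 1) x) \<partial>M)"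
proof -
  define m where "m = k - i + 1"
  define h where "h = i - 1"
  define N where "N = PiM {..<m} (\<lambda>_. borel :: real measure)"
  define G where "G = (\<lambda>v :: nat \<Rightarrow> real. F (v 0, v (k - i)))"
  have m0: "0 \<in> {..<m}" "k - i \<in> {..<m}" unfolding m_def by auto
  have Gm: "G \<in> borel_measurable N"
    unfolding G_def N_def
    by (intro measurable_compose[OF _ F] borel_measurable_Pair measurable_component_singleton m0)
  have v1: "(\<lambda>x. \<lambda>j\<in>{..<m}. Y (Suc j + h) x) \<in> measurable M N"
    unfolding N_def by (intro measurable_restrict meas)
  have v0: "(\<lambda>x. \<lambda>j\<in>{..<m}. Y (Suc j) x) \<in> measurable M N"
    unfolding N_def by (intro measurable_restrict meas)
  have D: "distr M N (\<lambda>x. \<lambda>j\<in>{..<m}. Y (Suc j + h) x) = distr M N (\<lambda>x. \<lambda>j\<in>{..<m}. Y (Suc j) x)"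
    using stat unfolding strictly_stationary_def N_def by blast
  have e1: "\<And>x. G (\<lambda>j\<in>{..<m}. Y (Suc j + h) x) = F (Y i x, Y k x)"
    using m0 ik unfolding G_def h_def by (auto simp: Suc_diff_le)
  have e0: "\<And>x. G (\<lambda>j\<in>{..<m}. Y (Suc j) x) = F (Y 1 x, Y (k - i + 1) x)"
    using m0 unfolding G_def by auto
  show "integrable M (\<lambda>x. F (Y i x, Y k x)) = integrable M (\<lambda>x. F (Y 1 x, Y (k - i + 1) x))"
    using integrable_distr_eq[OF v1 Gm] integrable_distr_eq[OF v0 Gm] D e1 e0 by simp
  show "(\<integral>x. F (Y i x, Y k x) \<partial>M) = (\<integral>x. F (Y 1 x, Y (k - i + 1) x) \<partial>M)"
    using integral_distr[OF v1 Gm] integral_distr[OF v0 Gm] D e1 e0 by simp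
qed




definition dd :: "nat \<Rightarrow> nat \<Rightarrow> nat" where "dd i k = (if i \<le> k then k - i else i - k)"

definition PS :: "(nat \<Rightarrow> real) \<Rightarrow> nat \<Rightarrow> real" where "PS g m = (\<Sum>d<m. g (Suc d))"

lemma row1:
  assumes "1 \<le> i"
  shows "(\<Sum>k\<in>{1..i}. g (dd i k)) = g 0 + PS g (i - 1)"
proof -
  have "(\<Sum>k\<in>{1..i}. g (dd i k)) = (\<Sum>k<i. g (dd i (Suc k)))"
    by (simp add: sum.atLeast1_atMost_eq)
  also have "\<dots> = (\<Sum>k<i. g (i - Suc k))"
    by (intro sum.cong) (auto simp: dd_def)
  also have "\<dots> = sum g {..<i}" by (rule sum.nat_diff_reindex)
  also have "\<dots> = g 0 + PS g (i - 1)"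
    using assms by (cases i) (auto simp: PS_def sum.lessThan_Suc_shift simp del: sum.lessThan_Suc)
  finally show ?thesis .
qed

lemma row2:
  assumes "1 \<le> i" "i \<le> L"
  shows "(\<Sum>k\<in>{1..L}. g (dd i k)) = g 0 + PS g (i - 1) + PS g (L - i)"
  using assms
proof (induction L)
  case 0 then show ?case by simp
next
  case (Suc L)
  show ?case
  proof (cases "Suc L = i")
    case True then show ?thesis using row1[OF Suc.prems(1)] by (simp add: PS_def)
  next
    case False
    then have iL: "i \<le> L" using Suc.prems by simp
    have "(\<Sum>k\<in>{1..Suc L}. g (dd i k)) = (\<Sum>k\<in>{1..L}. g (dd i k)) + g (dd i (Suc L))"
      by simp
    also have "\<dots> = g 0 + PS g (i - 1) + PS g (L - i) + g (Suc (L - i))"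
      using Suc.IH[OF Suc.prems(1) iL] iL by (simp add: dd_def Suc_diff_le)
    also have "\<dots> = g 0 + PS g (i - 1) + PS g (Suc L - i)"
      using iL by (simp add: PS_def Suc_diff_le)
    finally show ?thesis .
  qed
qed

lemma row_shift:
  assumes "a < i" "i \<le> a + L"
  shows "(\<Sum>k\<in>{a+1..a+L}. g (dd i k)) = g 0 + PS g (i - a - 1) + PS g (a + L - i)"
proof -
  have "(\<Sum>k\<in>{a+1..a+L}. g (dd i k)) = (\<Sum>k\<in>{1..L}. g (dd i (k + a)))"
    using sum.shift_bounds_cl_nat_ivl[of "\<lambda>k. g (dd i k)" 1 a L] by (simp add: add.commute)
  also have "\<dots> = (\<Sum>k\<in>{1..L}. g (dd (i - a) k))"
    using assms by (intro sum.cong) (auto simp: dd_def add.commute)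
  also have "\<dots> = g 0 + PS g (i - a - 1) + PS g (L - (i - a))"
    using assms by (intro row2) auto
  also have "L - (i - a) = a + L - i" using assms by simp
  finally show ?thesis .
qed

lemma double_bound:
  assumes B: "\<And>m. \<bar>PS g m\<bar> \<le> B"
  shows "\<bar>\<Sum>i\<in>{a+1..a+L}. \<Sum>k\<in>{a+1..a+L}. g (dd i k)\<bar> \<le> real L * (\<bar>g 0\<bar> + 2 * B)"
proof -
  have "\<bar>\<Sum>i\<in>{a+1..a+L}. \<Sum>k\<in>{a+1..a+L}. g (dd i k)\<bar> \<le> (\<Sum>i\<in>{a+1..a+L}. \<bar>\<Sum>k\<in>{a+1..a+L}. g (dd i k)\<bar>)"
    by (rule sum_abs)
  also have "\<dots> \<le> (\<Sum>i\<in>{a+1..a+L}. \<bar>g 0\<bar> + 2 * B)"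
  proof (rule sum_mono)
    fix i assume "i \<in> {a+1..a+L}"
    then have "(\<Sum>k\<in>{a+1..a+L}. g (dd i k)) = g 0 + PS g (i - a - 1) + PS g (a + L - i)"
      by (intro row_shift) auto
    then show "\<bar>\<Sum>k\<in>{a+1..a+L}. g (dd i k)\<bar> \<le> \<bar>g 0\<bar> + 2 * B"
      using B[of "i - a - 1"] B[of "a + L - i"] by linarith
  qed
  also have "\<dots> = real L * (\<bar>g 0\<bar> + 2 * B)" by simp
  finally show ?thesis .
qed




locale mom =
  fixes M :: "'a measure" and Y :: "nat \<Rightarrow> 'a \<Rightarrow> real"
  assumes prob: "prob_space M"
    and meas: "\<And>i. Y i \<in> borel_measurable M"
    and stat: "strictly_stationary M Y"
    and var1: "integrable M (\<lambda>x. (Y 1 x)\<^sup>2)" "(\<integral>x. (Y 1 x)\<^sup>2 \<partial>M) = 1"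
    and Y4: "integrable M (\<lambda>x. (Y 1 x)^4)"
begin

interpretation P: prob_space M by (rule prob)

definition gg :: "nat \<Rightarrow> real" where "gg d = (\<integral>x. (Y 1 x)\<^sup>2 * (Y (d + 1) x)\<^sup>2 \<partial>M)"

lemma intZ: assumes "1 \<le> i" shows "integrable M (\<lambda>x. (Y i x)\<^sup>2)" "(\<integral>x. (Y i x)\<^sup>2 \<partial>M) = 1"
proof -
  have F: "(\<lambda>p::real\<times>real. (fst p)\<^sup>2) \<in> borel_measurable borel" by (intro borel_measurable_continuous_onI continuous_intros)
  show "integrable M (\<lambda>x. (Y i x)\<^sup>2)"
    using stat_pair(1)[OF meas stat F assms order_refl] var1 by simp
  show "(\<integral>x. (Y i x)\<^sup>2 \<partial>M) = 1"
    using stat_pair(2)[OF meas stat F assms order_refl] var1 by simp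
qed

lemma int4: assumes "1 \<le> i" shows "integrable M (\<lambda>x. (Y i x)^4)"
proof -
  have F: "(\<lambda>p::real\<times>real. (fst p)^4) \<in> borel_measurable borel" by (intro borel_measurable_continuous_onI continuous_intros)
  show ?thesis
    using stat_pair(1)[OF meas stat F assms order_refl] Y4 by simp
qed

lemma intZZ: assumes "1 \<le> i" "1 \<le> k" shows "integrable M (\<lambda>x. (Y i x)\<^sup>2 * (Y k x)\<^sup>2)"
proof (rule Bochner_Integration.integrable_bound[OF Bochner_Integration.integrable_add[OF int4[OF assms(1)] int4[OF assms(2)]]])
  show "(\<lambda>x. (Y i x)\<^sup>2 * (Y k x)\<^sup>2) \<in> borel_measurable M" using meas by measurable
  show "AE x in M. norm ((Y i x)\<^sup>2 * (Y k x)\<^sup>2) \<le> norm ((Y i x)^4 + (Y k x)^4)"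
  proof (rule AE_I2)
    fix x
    have "0 \<le> ((Y i x)\<^sup>2 - (Y k x)\<^sup>2)\<^sup>2" by simp
    then have h2: "2 * ((Y i x)\<^sup>2 * (Y k x)\<^sup>2) \<le> (Y i x)^4 + (Y k x)^4"
      by (simp add: power2_eq_square algebra_simps power4_eq_xxxx)
    have h0: "0 \<le> (Y i x)\<^sup>2 * (Y k x)\<^sup>2" by simp
    have h3: "(Y i x)\<^sup>2 * (Y k x)\<^sup>2 \<le> (Y i x)^4 + (Y k x)^4" using h0 h2 by linarith
    have h4: "0 \<le> (Y i x)^4 + (Y k x)^4" using h0 h2 by linarith
    show "norm ((Y i x)\<^sup>2 * (Y k x)\<^sup>2) \<le> norm ((Y i x)^4 + (Y k x)^4)"
      using h0 h3 h4 by (simp only: real_norm_def abs_of_nonneg)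
  qed
qed

lemma EZZ: assumes "1 \<le> i" "1 \<le> k" shows "(\<integral>x. (Y i x)\<^sup>2 * (Y k x)\<^sup>2 \<partial>M) = gg (dd i k)"
proof -
  have F: "(\<lambda>p::real\<times>real. (fst p)\<^sup>2 * (snd p)\<^sup>2) \<in> borel_measurable borel" by (intro borel_measurable_continuous_onI continuous_intros)
  show ?thesis
  proof (cases "i \<le> k")
    case True
    then show ?thesis using stat_pair(2)[OF meas stat F assms(1) True]
      by (simp add: gg_def dd_def)
  next
    case False
    then have "k \<le> i" by simp
    then show ?thesis using stat_pair(2)[OF meas stat F assms(2) \<open>k \<le> i\<close>] False
      by (simp add: gg_def dd_def mult.commute)
  qed
qed

lemma intC: assumes "1 \<le> i" "1 \<le> k"
  shows "integrable M (\<lambda>x. ((Y i x)\<^sup>2 - 1) * ((Y k x)\<^sup>2 - 1))"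
    "(\<integral>x. ((Y i x)\<^sup>2 - 1) * ((Y k x)\<^sup>2 - 1) \<partial>M) = gg (dd i k) - 1"
proof -
  have e: "\<And>x. ((Y i x)\<^sup>2 - 1) * ((Y k x)\<^sup>2 - 1) = (Y i x)\<^sup>2 * (Y k x)\<^sup>2 - (Y i x)\<^sup>2 - (Y k x)\<^sup>2 + 1"
    by (simp add: algebra_simps)
  note I = intZZ[OF assms] intZ(1)[OF assms(1)] intZ(1)[OF assms(2)]
  show "integrable M (\<lambda>x. ((Y i x)\<^sup>2 - 1) * ((Y k x)\<^sup>2 - 1))"
    unfolding e using I by auto
  show "(\<integral>x. ((Y i x)\<^sup>2 - 1) * ((Y k x)\<^sup>2 - 1) \<partial>M) = gg (dd i k) - 1"
    unfolding e using I EZZ[OF assms] intZ(2)[OF assms(1)] intZ(2)[OF assms(2)]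
    by (simp add: Bochner_Integration.integral_add Bochner_Integration.integral_diff P.prob_space)
qed

lemma block_eq:
  fixes a L :: nat assumes L: "L \<ge> 1"
  defines "Sb \<equiv> \<lambda>x. (1 / real L) * (\<Sum>i\<in>{a+1..a+L}. (Y i x)\<^sup>2) - 1"
  shows "integrable M (\<lambda>x. (Sb x)\<^sup>2)"
    "(\<integral>x. (Sb x)\<^sup>2 \<partial>M) = (1 / (real L)\<^sup>2) * (\<Sum>i\<in>{a+1..a+L}. \<Sum>k\<in>{a+1..a+L}. gg (dd i k) - 1)"
proof -
  have e: "(Sb x)\<^sup>2 = (1 / (real L)\<^sup>2) * (\<Sum>i\<in>{a+1..a+L}. \<Sum>k\<in>{a+1..a+L}. ((Y i x)\<^sup>2 - 1) * ((Y k x)\<^sup>2 - 1))" for x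
  proof -
    have "Sb x = (1 / real L) * (\<Sum>i\<in>{a+1..a+L}. (Y i x)\<^sup>2 - 1)"
      using L unfolding Sb_def by (simp add: sum_subtractf field_simps)
    then show ?thesis
      by (simp add: power2_eq_square sum_product field_simps)
  qed
  show "integrable M (\<lambda>x. (Sb x)\<^sup>2)"
    unfolding e by (intro integrable_mult_right Bochner_Integration.integrable_sum intC) auto
  have "(\<integral>x. (Sb x)\<^sup>2 \<partial>M) = (1 / (real L)\<^sup>2) * (\<Sum>i\<in>{a+1..a+L}. \<Sum>k\<in>{a+1..a+L}.
       (\<integral>x. ((Y i x)\<^sup>2 - 1) * ((Y k x)\<^sup>2 - 1) \<partial>M))"
  proof -
    have "(\<integral>x. (\<Sum>i\<in>{a+1..a+L}. \<Sum>k\<in>{a+1..a+L}. ((Y i x)\<^sup>2 - 1) * ((Y k x)\<^sup>2 - 1)) \<partial>M)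
      = (\<Sum>i\<in>{a+1..a+L}. (\<integral>x. (\<Sum>k\<in>{a+1..a+L}. ((Y i x)\<^sup>2 - 1) * ((Y k x)\<^sup>2 - 1)) \<partial>M))"
      by (rule Bochner_Integration.integral_sum) (intro Bochner_Integration.integrable_sum intC; auto)
    also have "\<dots> = (\<Sum>i\<in>{a+1..a+L}. \<Sum>k\<in>{a+1..a+L}. (\<integral>x. ((Y i x)\<^sup>2 - 1) * ((Y k x)\<^sup>2 - 1) \<partial>M))"
      by (intro sum.cong refl Bochner_Integration.integral_sum intC) auto
    finally show ?thesis unfolding e by simp
  qed
  also have "\<dots> = (1 / (real L)\<^sup>2) * (\<Sum>i\<in>{a+1..a+L}. \<Sum>k\<in>{a+1..a+L}. gg (dd i k) - 1)"
    by (intro arg_cong2[where f="(*)"] refl sum.cong) (auto simp: intC(2))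
  finally show "(\<integral>x. (Sb x)\<^sup>2 \<partial>M) = (1 / (real L)\<^sup>2) * (\<Sum>i\<in>{a+1..a+L}. \<Sum>k\<in>{a+1..a+L}. gg (dd i k) - 1)" .
qed

end



lemma asym:
  assumes s: "1/2 < s" "s < 1"
  shows "eventually (\<lambda>n. 1 \<le> n \<and> 1 \<le> blen s n \<and> 1 \<le> nblocks s n \<and>
     real (nblocks s n) / real (blen s n) \<le> 4 * real n powr (1 - 2 * s) \<and>
     sqrt (real n) / real (blen s n) \<le> 2 * real n powr (1/2 - s)) sequentially"
  using eventually_ge_at_top[of "4::nat"]
proof eventually_elim
  case (elim n)
  define p where "p = real n powr s"
  have n1: "1 \<le> real n" using elim by simp
  have "sqrt (real n) \<ge> 2" using elim
    by (metis numeral_le_real_of_nat_iff real_sqrt_four real_sqrt_le_mono)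
  moreover have "sqrt (real n) = real n powr (1/2)" by (simp add: powr_half_sqrt)
  moreover have "real n powr (1/2) \<le> p" unfolding p_def using n1 s by (intro powr_mono) auto
  ultimately have p2: "2 \<le> p" by linarith
  have pn: "p \<le> real n" unfolding p_def using n1 s powr_mono[of s 1 "real n"] by auto
  have lf: "real (blen s n) = of_int \<lfloor>p\<rfloor>" unfolding blen_def p_def using p2 p_def
    by (simp add: p_def)
  have l1: "real (blen s n) \<ge> p - 1" "real (blen s n) \<le> p" using lf by linarith+
  have lp: "real (blen s n) \<ge> p / 2" using l1 p2 by linarith
  have lpos: "1 \<le> blen s n" using l1 p2 by linarith
  have ln: "blen s n \<le> n" using l1 pn by linarith
  have b1: "1 \<le> nblocks s n" unfolding nblocks_def using lpos ln
    by (metis One_nat_def Suc_le_eq div_greater_zero_iff)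
  have bl: "real (nblocks s n) \<le> real n / real (blen s n)"
  proof -
    have "nblocks s n * blen s n \<le> n" unfolding nblocks_def by (rule div_times_less_eq_dividend)
    then have "real (nblocks s n) * real (blen s n) \<le> real n" by (metis of_nat_le_iff of_nat_mult)
    then show ?thesis using lpos by (simp add: field_simps)
  qed
  have Lpos: "0 < real (blen s n)" using lpos by simp
  have "real (nblocks s n) / real (blen s n) \<le> real n / (real (blen s n))\<^sup>2"
    using divide_right_mono[OF bl, of "real (blen s n)"] Lpos by (simp add: power2_eq_square)
  also have "\<dots> \<le> real n / (p / 2)\<^sup>2"
    using lp p2 n1 by (intro divide_left_mono power_mono mult_pos_pos) auto
  also have "\<dots> = 4 * (real n / p\<^sup>2)" by (simp add: power2_eq_square field_simps)
  also have "real n / p\<^sup>2 = real n powr (1 - 2 * s)"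
    unfolding p_def using n1
    by (simp add: powr_diff powr_mult_base power2_eq_square powr_add[symmetric])
  finally have A: "real (nblocks s n) / real (blen s n) \<le> 4 * real n powr (1 - 2 * s)" .
  have "sqrt (real n) / real (blen s n) \<le> sqrt (real n) / (p / 2)"
    using lp p2 by (intro divide_left_mono) auto
  also have "\<dots> = 2 * (real n powr (1/2) / p)" by (simp add: powr_half_sqrt)
  also have "real n powr (1/2) / p = real n powr (1/2 - s)" unfolding p_def using n1
    by (simp add: powr_diff)
  finally have B: "sqrt (real n) / real (blen s n) \<le> 2 * real n powr (1/2 - s)" .
  show ?case using A B lpos b1 elim by simp
qed




lemma pair_sum:
  fixes f :: "nat \<Rightarrow> real"
  shows "(\<Sum>j\<in>{1..b}. \<Sum>k\<in>{1..b} - {j}. f j + f k) = 2 * (real b - 1) * (\<Sum>j\<in>{1..b}. f j)"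
proof -
  have "(\<Sum>j\<in>{1..b}. \<Sum>k\<in>{1..b} - {j}. f j + f k)
      = (\<Sum>j\<in>{1..b}. (real b - 1) * f j + ((\<Sum>k\<in>{1..b}. f k) - f j))"
  proof (intro sum.cong refl)
    fix j assume j: "j \<in> {1..b}"
    have c: "card ({1..b} - {j}) = b - 1" using j by simp
    have "real (b - 1) = real b - 1" using j by auto
    then show "(\<Sum>k\<in>{1..b} - {j}. f j + f k) = (real b - 1) * f j + ((\<Sum>k\<in>{1..b}. f k) - f j)"
      using j c by (simp add: sum.distrib sum_diff1)
  qed
  also have "\<dots> = 2 * (real b - 1) * (\<Sum>j\<in>{1..b}. f j)"
    by (simp add: sum.distrib sum_subtractf sum_distrib_left[symmetric] sum_distrib_right[symmetric] algebra_simps)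
  finally show ?thesis .
qed

lemma pw:
  fixes S :: "nat \<Rightarrow> real" and b :: nat and q :: real
  assumes q: "q > 0" and S: "\<And>j. j \<in> {1..b} \<Longrightarrow> \<bar>S j\<bar> \<le> 1/2"
  shows "\<bar>(1 / (real b * (real b - 1))) * (\<Sum>j\<in>{1..b}. \<Sum>k\<in>{1..b} - {j}. \<bar>ln (q * (1 + S j)) - ln (q * (1 + S k))\<bar>)
        - (1 / (real b * (real b - 1))) * (\<Sum>j\<in>{1..b}. \<Sum>k\<in>{1..b} - {j}. \<bar>S j - S k\<bar>)\<bar>
        \<le> 4 / real b * (\<Sum>j\<in>{1..b}. (S j)\<^sup>2)"
proof (cases "b = 0")
  case True then show ?thesis by simp
next
  case False
  define c where "c = 1 / (real b * (real b - 1))"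
  have c0: "c \<ge> 0" unfolding c_def using False by simp
  have cb: "c * (4 * (real b - 1)) \<le> 4 / real b"
  proof (cases "b = 1")
    case True then show ?thesis by (simp add: c_def)
  next
    case False
    then have "real b - 1 > 0" using \<open>b \<noteq> 0\<close> by simp
    then show ?thesis unfolding c_def by (simp add: field_simps)
  qed
  have key: "\<bar>\<bar>ln (q * (1 + S j)) - ln (q * (1 + S k))\<bar> - \<bar>S j - S k\<bar>\<bar> \<le> 2 * (S j)\<^sup>2 + 2 * (S k)\<^sup>2"
    if j: "j \<in> {1..b}" and k: "k \<in> {1..b}" for j k
  proof -
    have sj: "\<bar>S j\<bar> \<le> 1/2" "\<bar>S k\<bar> \<le> 1/2" using S j k by auto
    have pj: "1 + S j > 0" "1 + S k > 0" using sj by auto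
    have "ln (q * (1 + S j)) - ln (q * (1 + S k)) = ln (1 + S j) - ln (1 + S k)"
      using q pj by (simp add: ln_mult)
    moreover have "\<bar>ln (1 + S j) - S j\<bar> \<le> 2 * (S j)\<^sup>2" by (rule abs_ln_one_plus_x_minus_x_bound[OF sj(1)])
    moreover have "\<bar>ln (1 + S k) - S k\<bar> \<le> 2 * (S k)\<^sup>2" by (rule abs_ln_one_plus_x_minus_x_bound[OF sj(2)])
    ultimately show ?thesis by linarith
  qed
  have "\<bar>c * (\<Sum>j\<in>{1..b}. \<Sum>k\<in>{1..b} - {j}. \<bar>ln (q * (1 + S j)) - ln (q * (1 + S k))\<bar>)
        - c * (\<Sum>j\<in>{1..b}. \<Sum>k\<in>{1..b} - {j}. \<bar>S j - S k\<bar>)\<bar>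
      = c * \<bar>\<Sum>j\<in>{1..b}. \<Sum>k\<in>{1..b} - {j}. \<bar>ln (q * (1 + S j)) - ln (q * (1 + S k))\<bar> - \<bar>S j - S k\<bar>\<bar>"
    using c0 by (simp add: right_diff_distrib[symmetric] sum_subtractf abs_mult)
  also have "\<dots> \<le> c * (\<Sum>j\<in>{1..b}. \<Sum>k\<in>{1..b} - {j}. 2 * (S j)\<^sup>2 + 2 * (S k)\<^sup>2)"
  proof (intro mult_left_mono c0)
    have "\<bar>\<Sum>j\<in>{1..b}. \<Sum>k\<in>{1..b} - {j}. \<bar>ln (q * (1 + S j)) - ln (q * (1 + S k))\<bar> - \<bar>S j - S k\<bar>\<bar>
        \<le> (\<Sum>j\<in>{1..b}. \<Sum>k\<in>{1..b} - {j}. \<bar>\<bar>ln (q * (1 + S j)) - ln (q * (1 + S k))\<bar> - \<bar>S j - S k\<bar>\<bar>)"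
      by (rule order_trans[OF sum_abs sum_mono[OF sum_abs]])
    also have "\<dots> \<le> (\<Sum>j\<in>{1..b}. \<Sum>k\<in>{1..b} - {j}. 2 * (S j)\<^sup>2 + 2 * (S k)\<^sup>2)"
      by (intro sum_mono key) auto
    finally show "\<bar>\<Sum>j\<in>{1..b}. \<Sum>k\<in>{1..b} - {j}. \<bar>ln (q * (1 + S j)) - ln (q * (1 + S k))\<bar> - \<bar>S j - S k\<bar>\<bar>
        \<le> (\<Sum>j\<in>{1..b}. \<Sum>k\<in>{1..b} - {j}. 2 * (S j)\<^sup>2 + 2 * (S k)\<^sup>2)" .
  qed
  also have "(\<Sum>j\<in>{1..b}. \<Sum>k\<in>{1..b} - {j}. 2 * (S j)\<^sup>2 + 2 * (S k)\<^sup>2) = 2 * (real b - 1) * (\<Sum>j\<in>{1..b}. 2 * (S j)\<^sup>2)"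
    by (rule pair_sum)
  also have "c * \<dots> = (c * (4 * (real b - 1))) * (\<Sum>j\<in>{1..b}. (S j)\<^sup>2)"
    by (simp add: sum_distrib_left[symmetric] algebra_simps)
  also have "\<dots> \<le> 4 / real b * (\<Sum>j\<in>{1..b}. (S j)\<^sup>2)"
    by (intro mult_right_mono cb sum_nonneg) auto
  finally show ?thesis unfolding c_def .
qed




lemma pow4_bound:
  fixes y theta :: real assumes "theta > 0"
  shows "y ^ 4 \<le> 1 + \<bar>y\<bar> powr (4 + 2 * theta)"
proof (cases "\<bar>y\<bar> \<le> 1")
  case True
  have "\<bar>y\<bar> ^ 4 \<le> 1" using True by (intro power_le_one) auto
  then show ?thesis by (simp add: power_abs[symmetric]) (smt (verit) powr_ge_zero)
next
  case False
  then have y: "\<bar>y\<bar> > 1" by simp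
  have "y ^ 4 = \<bar>y\<bar> ^ 4" by (simp add: power_abs[symmetric] power_even_abs_numeral)
  also have "\<dots> = \<bar>y\<bar> powr (real 4)" using y by (subst powr_realpow) auto
  also have "\<dots> \<le> \<bar>y\<bar> powr (4 + 2 * theta)" using y assms by (intro powr_mono) auto
  finally show ?thesis by simp
qed

lemma Y4_int:
  fixes M :: "'a measure" and Y :: "nat \<Rightarrow> 'a \<Rightarrow> real" and theta :: real
  assumes "prob_space M" "\<And>i. Y i \<in> borel_measurable M" "theta > 0"
    "integrable M (\<lambda>x. \<bar>Y 1 x\<bar> powr (4 + 2 * theta))"
  shows "integrable M (\<lambda>x. (Y 1 x) ^ 4)"
proof -
  interpret prob_space M by fact
  show ?thesis
  proof (rule Bochner_Integration.integrable_bound[OF Bochner_Integration.integrable_add[OF integrable_const assms(4)]])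
    show "(\<lambda>x. (Y 1 x) ^ 4) \<in> borel_measurable M" using assms(2) by measurable
    show "AE x in M. norm ((Y 1 x) ^ 4) \<le> norm (1 + \<bar>Y 1 x\<bar> powr (4 + 2 * theta))"
      using pow4_bound[OF assms(3)] by (intro AE_I2) (simp add: power_abs[symmetric] abs_of_nonneg add_nonneg_nonneg)
  qed
qed




lemma bS_eq:
  assumes "1 \<le> j"
  shows "block_S s Y n j x = (1 / real (blen s n)) *
     (\<Sum>i\<in>{(j-1) * blen s n + 1 .. (j-1) * blen s n + blen s n}. (Y i x)\<^sup>2) - 1"
proof -
  have "j * blen s n = (j-1) * blen s n + blen s n" using assms by (cases j) auto
  then show ?thesis unfolding block_S_def by simp
qed

lemma bV_eq:
  "block_var s (\<lambda>_. sig) mu Y n j x = sig\<^sup>2 * (1 + block_S s Y n j x)"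
  unfolding block_var_def block_S_def obs_def
  by (simp add: power_mult_distrib sum_distrib_left[symmetric] algebra_simps)

lemma U1_eq:
  "U1 s (\<lambda>_. sig) mu Y n x = (1 / (real (nblocks s n) * (real (nblocks s n) - 1))) *
     (\<Sum>j\<in>{1..nblocks s n}. \<Sum>k\<in>{1..nblocks s n} - {j}.
        \<bar>ln (sig\<^sup>2 * (1 + block_S s Y n j x)) - ln (sig\<^sup>2 * (1 + block_S s Y n k x))\<bar>)"
  unfolding U1_def bV_eq ..




theorem proposition3p2:
  fixes M :: "'a measure" and Y :: "nat \<Rightarrow> 'a \<Rightarrow> real"
    and mu :: "real \<Rightarrow> real" and sigmaH s theta :: real
  assumes prob: "prob_space M"
    and meas: "\<And>i. Y i \<in> borel_measurable M"
    and stat: "strictly_stationary M Y"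
    and mean0: "integrable M (Y 1)" "(\<integral>x. Y 1 x \<partial>M) = 0"
    and var1: "integrable M (\<lambda>x. (Y 1 x)\<^sup>2)" "(\<integral>x. (Y 1 x)\<^sup>2 \<partial>M) = 1"
    and abs_reg: "(\<lambda>k. beta_Y M Y k) \<longlonglongrightarrow> 0"
    and lip: "\<exists>C. C-lipschitz_on {0..1} mu"
    and sigH: "sigmaH > 0"
    and kappa_fin: "summable (\<lambda>k. (\<integral>x. (Y 1 x)\<^sup>2 * (Y (k + 2) x)\<^sup>2 \<partial>M) - 1)"
    and kappa_pos: "(\<integral>x. (Y 1 x) ^ 4 \<partial>M) - 1
                    + 2 * (\<Sum>k. (\<integral>x. (Y 1 x)\<^sup>2 * (Y (k + 2) x)\<^sup>2 \<partial>M) - 1) > 0"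
    and theta: "theta > 0"
    and A1: "integrable M (\<lambda>x. \<bar>Y 1 x\<bar> powr (4 + 2 * theta))"
    and A2: "summable (\<lambda>k. beta_Y M Y (Suc k) powr (theta / (2 + theta)))"
    and s: "0.5 < s" "s < 1"
  shows "\<forall>\<epsilon>>0. (\<lambda>n. measure M {x \<in> space M.
           \<bar>sqrt (real n) * (U1 s (\<lambda>_. sigmaH) mu Y n x - U2 s Y n x)\<bar> > \<epsilon>}) \<longlonglongrightarrow> 0"
proof (intro allI impI)
  fix \<epsilon> :: real assume eps: "\<epsilon> > 0"
  interpret P: prob_space M by (rule prob)
  have Y4: "integrable M (\<lambda>x. (Y 1 x) ^ 4)" using Y4_int[of M Y theta] prob meas theta A1 by blast
  interpret mom M Y using prob meas stat var1 Y4 by unfold_locales auto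
  have s2: "1/2 < s" using s by simp
  have "summable (\<lambda>d. gg (Suc d) - 1)" using kappa_fin by (simp add: gg_def)
  then have "convergent (\<lambda>m. PS (\<lambda>d. gg d - 1) m)"
    unfolding PS_def by (simp add: summable_iff_convergent)
  then have "Bseq (\<lambda>m. PS (\<lambda>d. gg d - 1) m)" by (rule convergent_imp_Bseq)
  then obtain B where B: "\<And>m. \<bar>PS (\<lambda>d. gg d - 1) m\<bar> \<le> B"
    unfolding Bseq_def by auto
  have B0: "0 \<le> B" using B[of 0] by (simp add: PS_def)
  define K where "K = \<bar>gg 0 - 1\<bar> + 2 * B"
  have K0: "0 \<le> K" unfolding K_def using B0 by simp
  have EB: "integrable M (\<lambda>x. (block_S s Y n j x)\<^sup>2) \<and> (\<integral>x. (block_S s Y n j x)\<^sup>2 \<partial>M) \<le> K / real (blen s n)"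
    if L: "1 \<le> blen s n" and j: "1 \<le> j" for n j
  proof -
    define L where "L = blen s n"
    define a where "a = (j - 1) * L"
    have fe: "(\<lambda>x. (block_S s Y n j x)\<^sup>2) = (\<lambda>x. ((1 / real L) * (\<Sum>i\<in>{a+1..a+L}. (Y i x)\<^sup>2) - 1)\<^sup>2)"
      by (rule ext) (simp only: bS_eq[OF j] a_def L_def add.commute)
    have L1: "1 \<le> L" using L unfolding L_def .
    note be = block_eq[OF L1, of a]
    have db: "\<bar>\<Sum>i\<in>{a+1..a+L}. \<Sum>k\<in>{a+1..a+L}. gg (dd i k) - 1\<bar> \<le> real L * K"
      using double_bound[of "\<lambda>d. gg d - 1" B a L] B unfolding K_def by simp
    have "(1 / (real L)\<^sup>2) * (\<Sum>i\<in>{a+1..a+L}. \<Sum>k\<in>{a+1..a+L}. gg (dd i k) - 1)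
          \<le> (1 / (real L)\<^sup>2) * (real L * K)"
      using db by (intro mult_left_mono) auto
    also have "\<dots> = K / real L" using L1 by (simp add: power2_eq_square)
    finally show ?thesis using be unfolding fe L_def by simp
  qed
  define T where "T = (\<lambda>n x. \<Sum>j\<in>{1..nblocks s n}. (block_S s Y n j x)\<^sup>2)"
  define c where "c = (\<lambda>n. min (1/4) (\<epsilon> * real (nblocks s n) / (4 * sqrt (real n))))"
  define R where "R = (\<lambda>n::nat. 16 * K * real n powr (1 - 2 * s) + 8 * K / \<epsilon> * real n powr (1/2 - s))"
  have R0: "R \<longlonglongrightarrow> 0"
  proof -
    have "(\<lambda>n. real n powr (1 - 2 * s)) \<longlonglongrightarrow> 0"
      using s2 by (intro tendsto_neg_powr filterlim_real_sequentially) auto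
    moreover have "(\<lambda>n. real n powr (1/2 - s)) \<longlonglongrightarrow> 0"
      using s2 by (intro tendsto_neg_powr filterlim_real_sequentially) auto
    ultimately show ?thesis unfolding R_def
      by (intro tendsto_add_zero tendsto_mult_right_zero)
  qed
  have ev: "eventually (\<lambda>n. measure M {x \<in> space M.
           \<bar>sqrt (real n) * (U1 s (\<lambda>_. sigmaH) mu Y n x - U2 s Y n x)\<bar> > \<epsilon>} \<le> R n) sequentially"
    using asym[OF s2 s(2)]
  proof eventually_elim
    case (elim n)
    define b where "b = nblocks s n"
    define L where "L = blen s n"
    have n1: "1 \<le> n" and L1: "1 \<le> L" and b1: "1 \<le> b"
      and bL: "real b / real L \<le> 4 * real n powr (1 - 2 * s)"
      and sL: "sqrt (real n) / real L \<le> 2 * real n powr (1/2 - s)"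
      using elim unfolding b_def L_def by auto
    have sqn: "sqrt (real n) > 0" using n1 by simp
    have cpos: "c n > 0" unfolding c_def using eps b1 sqn by (simp add: b_def)
    have Tint: "integrable M (T n)" unfolding T_def
      using EB L1 unfolding L_def by (intro Bochner_Integration.integrable_sum) auto
    have ET: "(\<integral>x. T n x \<partial>M) \<le> real b * (K / real L)"
    proof -
      have "(\<integral>x. T n x \<partial>M) = (\<Sum>j\<in>{1..b}. (\<integral>x. (block_S s Y n j x)\<^sup>2 \<partial>M))"
        unfolding T_def b_def using EB L1 unfolding L_def
        by (intro Bochner_Integration.integral_sum) auto
      also have "\<dots> \<le> (\<Sum>j\<in>{1..b}. K / real L)"
        using EB L1 unfolding L_def by (intro sum_mono) auto
      finally show ?thesis by simp
    qed
    have Tm: "T n \<in> borel_measurable M" using Tint by (rule borel_measurable_integrable)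
    have Tnn: "\<And>x. 0 \<le> T n x" unfolding T_def by (intro sum_nonneg) auto
    have sub: "{x \<in> space M. \<bar>sqrt (real n) * (U1 s (\<lambda>_. sigmaH) mu Y n x - U2 s Y n x)\<bar> > \<epsilon>}
        \<subseteq> {x \<in> space M. T n x \<ge> c n}"
    proof (safe)
      fix x assume x: "x \<in> space M" and big: "\<bar>sqrt (real n) * (U1 s (\<lambda>_. sigmaH) mu Y n x - U2 s Y n x)\<bar> > \<epsilon>"
      show "T n x \<ge> c n"
      proof (rule ccontr)
        assume "\<not> T n x \<ge> c n"
        then have Tc: "T n x < c n" by simp
        then have T4: "T n x < 1/4" unfolding c_def by simp
        have Sb: "\<bar>block_S s Y n j x\<bar> \<le> 1/2" if j: "j \<in> {1..b}" for j
        proof -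
          have "(block_S s Y n j x)\<^sup>2 \<le> T n x" unfolding T_def
            using j by (intro member_le_sum) (auto simp: b_def)
          then have "(2 * block_S s Y n j x)\<^sup>2 \<le> 1" using T4 by (simp add: power_mult_distrib)
          then have "\<bar>2 * block_S s Y n j x\<bar> \<le> 1" by (metis abs_square_le_1)
          then show ?thesis by simp
        qed
        have sg: "sigmaH\<^sup>2 > 0" using sigH by simp
        have "\<bar>U1 s (\<lambda>_. sigmaH) mu Y n x - U2 s Y n x\<bar> \<le> 4 / real b * T n x"
          unfolding U1_eq U2_def T_def b_def
          using pw[OF sg, of b "\<lambda>j. block_S s Y n j x"] Sb unfolding b_def by simp
        then have "\<bar>sqrt (real n) * (U1 s (\<lambda>_. sigmaH) mu Y n x - U2 s Y n x)\<bar> \<le> sqrt (real n) * (4 / real b * T n x)"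
          using sqn by (simp only: abs_mult abs_of_pos) (intro mult_left_mono; simp)
        also have "\<dots> \<le> sqrt (real n) * (4 / real b * c n)"
          using Tc sqn b1 by (intro mult_left_mono) auto
        also have "\<dots> \<le> sqrt (real n) * (4 / real b * (\<epsilon> * real b / (4 * sqrt (real n))))"
          using sqn b1 unfolding c_def by (intro mult_left_mono) (auto simp: b_def)
        also have "\<dots> = \<epsilon>" using sqn b1 by (simp add: field_simps)
        finally show False using big by simp
      qed
    qed
    have setm: "{x \<in> space M. T n x \<ge> c n} \<in> sets M" using Tm by measurable
    have "measure M {x \<in> space M. \<bar>sqrt (real n) * (U1 s (\<lambda>_. sigmaH) mu Y n x - U2 s Y n x)\<bar> > \<epsilon>}
        \<le> measure M {x \<in> space M. T n x \<ge> c n}"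
      by (rule P.finite_measure_mono[OF sub setm])
    also have "\<dots> \<le> (\<integral>x. T n x \<partial>M) / c n"
      by (rule integral_Markov_inequality_measure[OF Tint sets.top _ cpos]) (simp add: Tnn)
    also have "\<dots> \<le> (real b * (K / real L)) / c n"
      using divide_right_mono[OF ET, of "c n"] cpos by simp
    also have "\<dots> \<le> R n"
    proof -
      define E where "E = real b * (K / real L)"
      have E0: "0 \<le> E" unfolding E_def using K0 by simp
      define y where "y = \<epsilon> * real b / (4 * sqrt (real n))"
      have ypos: "y > 0" unfolding y_def using eps b1 sqn by simp
      have "E / c n \<le> E / (1/4) + E / y"
      proof (cases "1/4 \<le> y")
        case True then have cn: "c n = 1/4" unfolding c_def y_def b_def by simp
        have "0 \<le> E / y" using E0 ypos by simp
        moreover have "E / c n = E / (1/4)" by (simp only: cn)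
        ultimately show ?thesis by linarith
      next
        case False then have "c n = y" unfolding c_def y_def b_def by simp
        then show ?thesis using E0 by simp
      qed
      also have "E / (1/4) = 4 * K * (real b / real L)" unfolding E_def by simp
      also have "\<dots> \<le> 4 * K * (4 * real n powr (1 - 2 * s))"
        using bL K0 by (intro mult_left_mono) auto
      also have "E / y = 4 * K / \<epsilon> * (sqrt (real n) / real L)"
        unfolding E_def y_def using b1 sqn eps L1 by (simp add: field_simps)
      also have "\<dots> \<le> 4 * K / \<epsilon> * (2 * real n powr (1/2 - s))"
        using sL K0 eps by (intro mult_left_mono) auto
      finally show ?thesis unfolding R_def E_def by simp
    qed
    finally show ?case .
  qed
  show "(\<lambda>n. measure M {x \<in> space M.
           \<bar>sqrt (real n) * (U1 s (\<lambda>_. sigmaH) mu Y n x - U2 s Y n x)\<bar> > \<epsilon>}) \<longlonglongrightarrow> 0"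
    by (rule tendsto_sandwich[OF _ ev tendsto_const R0]) simp
qed


end
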